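(* Let $(\mathcal{A},\mu,\alpha)$ be a Hom-flexible superalgebra and $\mathcal{A}^-=(\mathcal{A},[-,-],\alpha)$ with $[x,y]=xy-(-1)^{|x||y|}yx$. Then $\widetilde{J}_{\mathcal{A}^-}=2S_{\mathcal{A}}$, i.e. for all homogeneous $x,y,z$, $[[x,y],\alpha(z)]-[\alpha(x),[y,z]]-(-1)^{|y||z|}[[x,z],\alpha(y)]=2\big(\widetilde{as}(x,y,z)+(-1)^{|x|(|y|+|z|)}\widetilde{as}(y,z,x)+(-1)^{|z|(|x|+|y|)}\widetilde{as}(z,x,y)\big)$.
   Context: $\mathcal{A}=\mathcal{A}_0\oplus\mathcal{A}_1$ is a $\mathbb{Z}_2$-graded vector space over an algebraically closed field $\mathbb{K}$ of characteristic $0$; $|x|$ is the parity of homogeneous $x$; $\mu(x,y)=xy$ is even bilinear and $\alpha$ even linear. $\widetilde{as}(x,y,z)=(xy)\alpha(z)-\alpha(x)(yz)$. A Hom-flexible superalgebra is a triple $(\mathcal{A},\mu,\alpha)$ with $\widetilde{as}(x,y,z)+(-1)^{|x||y|+|x||z|+|y||z|}\widetilde{as}(z,y,x)=0$ for all homogeneous $x,y,z$. $S_{\mathcal{A}}$ denotes the cyclic Hom-associator $S_{\mathcal{A}}(x,y,z)=\widetilde{as}(x,y,z)+(-1)^{|x|(|y|+|z|)}\widetilde{as}(y,z,x)+(-1)^{|z|(|x|+|y|)}\widetilde{as}(z,x,y)$. *)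

theory Defs
  imports Main "HOL-Computational_Algebra.Polynomial"
begin

definition alg_closed :: "'k::field itself \<Rightarrow> bool" where
  "alg_closed _ \<longleftrightarrow> (\<forall>p :: 'k poly. degree p > 0 \<longrightarrow> (\<exists>x. poly p x = 0))"

definition gr :: "'v set \<Rightarrow> 'v set \<Rightarrow> nat \<Rightarrow> 'v set" where
  "gr A0 A1 i = (if even i then A0 else A1)"

definition homog :: "'v set \<Rightarrow> 'v set \<Rightarrow> 'v \<Rightarrow> bool" where
  "homog A0 A1 x \<longleftrightarrow> x \<in> A0 \<or> x \<in> A1"

text \<open>Parity |x| of a homogeneous element (0 if even, 1 otherwise; the zero vector gets 0).\<close>
definition par :: "'v set \<Rightarrow> 'v \<Rightarrow> nat" where
  "par A0 x = (if x \<in> A0 then 0 else 1)"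

definition sg :: "nat \<Rightarrow> 'v::ab_group_add \<Rightarrow> 'v" where
  "sg n v = (if even n then v else - v)"

definition Z2_graded :: "('k::field \<Rightarrow> 'v::ab_group_add \<Rightarrow> 'v) \<Rightarrow> 'v set \<Rightarrow> 'v set \<Rightarrow> bool" where
  "Z2_graded scale A0 A1 \<longleftrightarrow> vector_space scale \<and> module.subspace scale A0 \<and> module.subspace scale A1
     \<and> A0 \<inter> A1 = {0} \<and> (\<forall>v. \<exists>a\<in>A0. \<exists>b\<in>A1. v = a + b)"

definition even_bilinear :: "('k::field \<Rightarrow> 'v::ab_group_add \<Rightarrow> 'v) \<Rightarrow> 'v set \<Rightarrow> 'v set \<Rightarrow> ('v \<Rightarrow> 'v \<Rightarrow> 'v) \<Rightarrow> bool" where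
  "even_bilinear scale A0 A1 m \<longleftrightarrow>
     (\<forall>x. Vector_Spaces.linear scale scale (m x)) \<and> (\<forall>y. Vector_Spaces.linear scale scale (\<lambda>x. m x y))
     \<and> (\<forall>i j x y. x \<in> gr A0 A1 i \<and> y \<in> gr A0 A1 j \<longrightarrow> m x y \<in> gr A0 A1 (i + j))"

definition even_linear :: "('k::field \<Rightarrow> 'v::ab_group_add \<Rightarrow> 'v) \<Rightarrow> 'v set \<Rightarrow> 'v set \<Rightarrow> ('v \<Rightarrow> 'v) \<Rightarrow> bool" where
  "even_linear scale A0 A1 f \<longleftrightarrow> Vector_Spaces.linear scale scale f
     \<and> (\<forall>i x. x \<in> gr A0 A1 i \<longrightarrow> f x \<in> gr A0 A1 i)"

definition hom_as :: "('v \<Rightarrow> 'v \<Rightarrow> 'v) \<Rightarrow> ('v \<Rightarrow> 'v) \<Rightarrow> 'v \<Rightarrow> 'v \<Rightarrow> 'v \<Rightarrow> 'v::ab_group_add" where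
  "hom_as m \<alpha> x y z = m (m x y) (\<alpha> z) - m (\<alpha> x) (m y z)"

definition hom_flexible_super ::
  "('k::field \<Rightarrow> 'v::ab_group_add \<Rightarrow> 'v) \<Rightarrow> 'v set \<Rightarrow> 'v set \<Rightarrow> ('v \<Rightarrow> 'v \<Rightarrow> 'v) \<Rightarrow> ('v \<Rightarrow> 'v) \<Rightarrow> bool" where
  "hom_flexible_super scale A0 A1 m \<alpha> \<longleftrightarrow>
     Z2_graded scale A0 A1 \<and> even_bilinear scale A0 A1 m \<and> even_linear scale A0 A1 \<alpha>
     \<and> (\<forall>x y z. homog A0 A1 x \<and> homog A0 A1 y \<and> homog A0 A1 z \<longrightarrow>
          hom_as m \<alpha> x y z
          + sg (par A0 x * par A0 y + par A0 x * par A0 z + par A0 y * par A0 z) (hom_as m \<alpha> z y x) = 0)"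

definition scomm :: "'v set \<Rightarrow> ('v \<Rightarrow> 'v \<Rightarrow> 'v) \<Rightarrow> 'v \<Rightarrow> 'v \<Rightarrow> 'v::ab_group_add" where
  "scomm A0 m x y = m x y - sg (par A0 x * par A0 y) (m y x)"

definition cyc_as :: "'v set \<Rightarrow> ('v \<Rightarrow> 'v \<Rightarrow> 'v) \<Rightarrow> ('v \<Rightarrow> 'v) \<Rightarrow> 'v \<Rightarrow> 'v \<Rightarrow> 'v \<Rightarrow> 'v::ab_group_add" where
  "cyc_as A0 m \<alpha> x y z = hom_as m \<alpha> x y z
     + sg (par A0 x * (par A0 y + par A0 z)) (hom_as m \<alpha> y z x)
     + sg (par A0 z * (par A0 x + par A0 y)) (hom_as m \<alpha> z x y)"

end

theory Submission
  imports Defs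
begin

lemma sg_par2:
  assumes "w1 \<in> gr A0 A1 i" "w2 \<in> gr A0 A1 j" "A0 \<inter> A1 = {0}"
    and "w1 = 0 \<or> w2 = 0 \<Longrightarrow> v = 0"
  shows "sg (par A0 w1 * par A0 w2) v = sg (i * j) v"
proof (cases "v = 0")
  case True then show ?thesis by (simp add: sg_def)
next
  case False
  have z: "w \<in> A0 \<Longrightarrow> w \<in> A1 \<Longrightarrow> w = 0" for w using assms(3) by blast
  have n: "w1 \<noteq> 0" "w2 \<noteq> 0" using assms(4) False by auto
  have p1: "par A0 w1 = (if even i then 0 else 1)"
    using assms(1) z[of w1] n(1) unfolding par_def gr_def by (auto split: if_splits)
  have p2: "par A0 w2 = (if even j then 0 else 1)"
    using assms(2) z[of w2] n(2) unfolding par_def gr_def by (auto split: if_splits)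
  show ?thesis unfolding p1 p2 by (cases "even i"; cases "even j"; simp add: sg_def)
qed

lemma par_of:
  assumes "homog A0 A1 x"
  obtains a where "x \<in> gr A0 A1 a" "par A0 x = a" "a = 0 \<or> a = 1"
  using assms unfolding homog_def gr_def par_def
  by (metis odd_one even_zero)

lemma sg_neg: "sg n (- v) = - sg n (v::'v::ab_group_add)"
  by (simp add: sg_def)

lemma key: fixes Lxyz Rxyz Lyzx Ryzx Lzxy Rzxy Ryxz Rzyx Rxzy :: "'v::ab_group_add" and a b c :: nat
 assumes "a = 0 \<or> a = 1" "b = 0 \<or> b = 1" "c = 0 \<or> c = 1"
 shows "Lxyz - sg (a * b) (Ryxz - sg (a * b + a * c + b * c) (Lzxy - Rzxy)) - sg ((a + b) * c) (Rzxy - sg (a * b) (Rzyx)) - (Rxyz - sg (b * c) (Rxzy) - sg (a * (b + c)) (Lyzx - sg (b * c) (Rzyx - sg (a * b + a * c + b * c) (Lxyz - Rxyz)))) - sg (b * c) (Rxzy - sg (a * b + a * c + b * c) (Lyzx - Ryzx) - sg (a * c) (Lzxy) - sg ((a + c) * b) (Ryxz - sg (a * c) (Ryzx))) = Lxyz - Rxyz + sg (a * (b + c)) (Lyzx - Ryzx) + sg (c * (a + b)) (Lzxy - Rzxy) + (Lxyz - Rxyz + sg (a * (b + c)) (Lyzx - Ryzx) + sg (c * (a + b)) (Lzxy - Rzxy))"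
  using assms by (elim disjE) (simp_all add: sg_def algebra_simps)

theorem mainTheorem18:
  fixes scale :: "'k::field_char_0 \<Rightarrow> 'v::ab_group_add \<Rightarrow> 'v"
    and A0 A1 :: "'v set" and m :: "'v \<Rightarrow> 'v \<Rightarrow> 'v" and \<alpha> :: "'v \<Rightarrow> 'v"
  assumes "alg_closed TYPE('k)"
    and "hom_flexible_super scale A0 A1 m \<alpha>"
    and "homog A0 A1 x" and "homog A0 A1 y" and "homog A0 A1 z"
  shows "scomm A0 m (scomm A0 m x y) (\<alpha> z) - scomm A0 m (\<alpha> x) (scomm A0 m y z)
           - sg (par A0 y * par A0 z) (scomm A0 m (scomm A0 m x z) (\<alpha> y))
         = cyc_as A0 m \<alpha> x y z + cyc_as A0 m \<alpha> x y z"
proof -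
  have Z: "Z2_graded scale A0 A1" and B: "even_bilinear scale A0 A1 m"
    and E: "even_linear scale A0 A1 \<alpha>"
    and F: "\<And>x y z. homog A0 A1 x \<Longrightarrow> homog A0 A1 y \<Longrightarrow> homog A0 A1 z \<Longrightarrow>
          hom_as m \<alpha> x y z
          + sg (par A0 x * par A0 y + par A0 x * par A0 z + par A0 y * par A0 z) (hom_as m \<alpha> z y x) = 0"
    using assms(2) unfolding hom_flexible_super_def by blast+
  have VS: "vector_space scale" and S0: "module.subspace scale A0" and S1: "module.subspace scale A1"
    and I: "A0 \<inter> A1 = {0}" using Z unfolding Z2_graded_def by blast+
  have ml: "Vector_Spaces.linear scale scale (m u)" for u using B unfolding even_bilinear_def by blast
  have mr: "Vector_Spaces.linear scale scale (\<lambda>x. m x u)" for u using B unfolding even_bilinear_def by blast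
  have mg: "u \<in> gr A0 A1 i \<Longrightarrow> v \<in> gr A0 A1 j \<Longrightarrow> m u v \<in> gr A0 A1 (i+j)" for u v i j
    using B unfolding even_bilinear_def by blast
  have al: "Vector_Spaces.linear scale scale \<alpha>" using E unfolding even_linear_def by blast
  have ag: "u \<in> gr A0 A1 i \<Longrightarrow> \<alpha> u \<in> gr A0 A1 i" for u i
    using E unfolding even_linear_def by blast
  have mdr: "m u (v - w) = m u v - m u w" for u v w
    using ml[of u] unfolding linear_iff_module_hom by (rule module_hom.diff)
  have mdl: "m (v - w) u = m v u - m w u" for u v w
    using module_hom.diff[OF mr[of u, unfolded linear_iff_module_hom]] by simp
  have m0r: "m u 0 = 0" for u using ml[of u] unfolding linear_iff_module_hom by (rule module_hom.zero)
  have m0l: "m 0 u = 0" for u using module_hom.zero[OF mr[of u, unfolded linear_iff_module_hom]] by simp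
  have mnr: "m u (- v) = - m u v" for u v
    using ml[of u] unfolding linear_iff_module_hom by (rule module_hom.neg)
  have mnl: "m (- v) u = - m v u" for u v
    using module_hom.neg[OF mr[of u, unfolded linear_iff_module_hom]] by simp
  have a0: "\<alpha> 0 = 0" using al unfolding linear_iff_module_hom by (rule module_hom.zero)
  have msr: "m u (sg n v) = sg n (m u v)" for u v n by (simp add: sg_def mnr)
  have msl: "m (sg n v) u = sg n (m v u)" for u v n by (simp add: sg_def mnl)
  have subg: "u - sg n v \<in> gr A0 A1 i" if "u \<in> gr A0 A1 i" "v \<in> gr A0 A1 i" for u v i n
  proof -
    have MV: "module scale" using VS by (simp add: module_iff_vector_space)
    show ?thesis using that S0 S1 unfolding gr_def sg_def
      using module.subspace_diff[OF MV] module.subspace_add[OF MV]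
      by (auto simp: diff_conv_add_uminus[symmetric])
  qed
  have sc: "scomm A0 m u v = m u v - sg (i*j) (m v u)"
    if "u \<in> gr A0 A1 i" "v \<in> gr A0 A1 j" for u v i j
  proof -
    have "sg (par A0 u * par A0 v) (m v u) = sg (i*j) (m v u)"
      by (rule sg_par2[OF that I]) (auto simp: m0l m0r)
    then show ?thesis by (simp add: scomm_def)
  qed
  have scg: "scomm A0 m u v \<in> gr A0 A1 (i+j)"
    if "u \<in> gr A0 A1 i" "v \<in> gr A0 A1 j" for u v i j
  proof -
    have "m v u \<in> gr A0 A1 (i+j)" using mg[OF that(2,1)] by (simp add: add.commute)
    then show ?thesis unfolding sc[OF that] by (rule subg[OF mg[OF that]])
  qed
  obtain a where xa: "x \<in> gr A0 A1 a" "par A0 x = a" "a = 0 \<or> a = 1" using par_of[OF assms(3)] by blast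
  obtain b where yb: "y \<in> gr A0 A1 b" "par A0 y = b" "b = 0 \<or> b = 1" using par_of[OF assms(4)] by blast
  obtain c where zc: "z \<in> gr A0 A1 c" "par A0 z = c" "c = 0 \<or> c = 1" using par_of[OF assms(5)] by blast
  have e1: "scomm A0 m (scomm A0 m x y) (\<alpha> z) = m (m x y - sg(a*b)(m y x)) (\<alpha> z)
       - sg((a+b)*c)(m (\<alpha> z) (m x y - sg (a*b) (m y x)))"
    using sc[OF scg[OF xa(1) yb(1)] ag[OF zc(1)]] sc[OF xa(1) yb(1)] by simp
  have e2: "scomm A0 m (\<alpha> x) (scomm A0 m y z) = m (\<alpha> x) (m y z - sg(b*c)(m z y))
       - sg(a*(b+c))(m (m y z - sg (b*c) (m z y)) (\<alpha> x))"
    using sc[OF ag[OF xa(1)] scg[OF yb(1) zc(1)]] sc[OF yb(1) zc(1)] by simp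
  have e3: "scomm A0 m (scomm A0 m x z) (\<alpha> y) = m (m x z - sg(a*c)(m z x)) (\<alpha> y)
       - sg((a+c)*b)(m (\<alpha> y) (m x z - sg (a*c) (m z x)))"
    using sc[OF scg[OF xa(1) zc(1)] ag[OF yb(1)]] sc[OF xa(1) zc(1)] by simp
  have f1: "hom_as m \<alpha> x y z + sg (a*b+a*c+b*c) (hom_as m \<alpha> z y x) = 0"
    using F[OF assms(3-5)] xa yb zc by simp
  have f2: "hom_as m \<alpha> y z x + sg (a*b+a*c+b*c) (hom_as m \<alpha> x z y) = 0"
    using F[OF assms(4,5,3)] xa yb zc by (simp add: algebra_simps)
  have f3: "hom_as m \<alpha> z x y + sg (a*b+a*c+b*c) (hom_as m \<alpha> y x z) = 0"
    using F[OF assms(5,3,4)] xa yb zc by (simp add: algebra_simps)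
  define e where "e = a*b+a*c+b*c"
  have ss: "sg n (sg n v) = v" for n and v :: 'v by (simp add: sg_def)
  have sgm: "sg n (- v) = - sg n v" for n and v :: 'v by (simp add: sg_def)
  have solve: "L = R - sg e h1" if "h1 + sg e (L - R) = 0" for L R h1 :: 'v
  proof -
    have "sg e (L - R) = - h1" using that by (simp add: eq_neg_iff_add_eq_0 add.commute)
    then have "L - R = sg e (- h1)" by (metis ss)
    then show ?thesis by (simp add: sgm algebra_simps)
  qed
  have g1: "m (m z y) (\<alpha> x) = m (\<alpha> z) (m y x) - sg e (m (m x y) (\<alpha> z) - m (\<alpha> x) (m y z))"
    using f1 unfolding e_def hom_as_def by (rule solve[unfolded e_def])
  have g2: "m (m x z) (\<alpha> y) = m (\<alpha> x) (m z y) - sg e (m (m y z) (\<alpha> x) - m (\<alpha> y) (m z x))"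
    using f2 unfolding e_def hom_as_def by (rule solve[unfolded e_def])
  have g3: "m (m y x) (\<alpha> z) = m (\<alpha> y) (m x z) - sg e (m (m z x) (\<alpha> y) - m (\<alpha> z) (m x y))"
    using f3 unfolding e_def hom_as_def by (rule solve[unfolded e_def])
  show ?thesis
    unfolding e1 e2 e3 cyc_as_def xa(2) yb(2) zc(2) hom_as_def
    apply (simp only: mdl mdr msl msr g1 g2 g3 e_def)
    using key[where Lxyz = "m (m x y) (\<alpha> z)" and Rxyz = "m (\<alpha> x) (m y z)" and Lyzx = "m (m y z) (\<alpha> x)" and Ryzx = "m (\<alpha> y) (m z x)" and Lzxy = "m (m z x) (\<alpha> y)" and Rzxy = "m (\<alpha> z) (m x y)" and Ryxz = "m (\<alpha> y) (m x z)" and Rzyx = "m (\<alpha> z) (m y x)" and Rxzy = "m (\<alpha> x) (m z y)", OF xa(3) yb(3) zc(3)] by assumption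
qed

end
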